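(* Every classically perfect positive definite matrix $Q\in\mathcal{S}^n_{>0}$ is arithmetically equivalent to a perfect copositive matrix: there exists $U\in\mathrm{GL}_n(\mathbb{Z})$ such that $U^\top QU$ is perfect copositive.
   Context: $\mathcal{S}^n$: real symmetric $n\times n$ matrices, $\mathcal{S}^n_{>0}$ the positive definite ones; $B[v]=v^\top Bv$. Classical notions: $\min Q=\min\{Q[v]: v\in\mathbb{Z}^n\setminus\{0\}\}$, $\operatorname{Min}Q=\{v\in\mathbb{Z}^n: Q[v]=\min Q\}$; a positive definite $Q$ is classically perfect if it is the unique $Q'\in\mathcal{S}^n$ with $Q'[v]=\min Q$ for all $v\in\operatorname{Min}Q$. Two symmetric matrices $Q_1,Q_2$ are arithmetically equivalent if $Q_2=U^\top Q_1U$ for some $U\in\mathrm{GL}_n(\mathbb{Z})$. Copositive notions: $\mathcal{COP}^n=\{B\in\mathcal{S}^n: B[x]\ge0\ \forall x\in\mathbb{R}^n_{\ge0}\}$; strictly copositive means lying in its interior; $\min_{\mathcal{COP}}B=\inf\{B[v]: v\in\mathbb{Z}^n_{\ge0}\setminus\{0\}\}$, $\operatorname{Min}_{\mathcal{COP}}B=\{v\in\mathbb{Z}^n_{\ge0}: B[v]=\min_{\mathcal{COP}}B\}$; a strictly copositive $P$ is perfect copositive if it is the unique $Q\in\mathcal{S}^n$ with $Q[v]=\min_{\mathcal{COP}}P$ for all $v\in\operatorname{Min}_{\mathcal{COP}}P$. *)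

theory Defs
  imports "HOL-Analysis.Analysis"
begin

text \<open>Dimension n is the cardinality of the finite index type 'n.
  Matrices are real ^'n^'n, vectors real ^'n.\<close>

definition symmetric_mat :: "real^'n^'n \<Rightarrow> bool" where
  "symmetric_mat B \<longleftrightarrow> transpose B = B"

definition qform :: "real^'n^'n \<Rightarrow> real^'n \<Rightarrow> real" where
  "qform B v = v \<bullet> (B *v v)"

definition int_vec :: "real^'n \<Rightarrow> bool" where
  "int_vec v \<longleftrightarrow> (\<forall>i. v $ i \<in> \<int>)"

definition nonneg_vec :: "real^'n \<Rightarrow> bool" where
  "nonneg_vec v \<longleftrightarrow> (\<forall>i. v $ i \<ge> 0)"

definition int_mat :: "real^'n^'m \<Rightarrow> bool" where
  "int_mat U \<longleftrightarrow> (\<forall>i j. U $ i $ j \<in> \<int>)"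

definition GL_Z :: "real^'n^'n \<Rightarrow> bool" where
  "GL_Z U \<longleftrightarrow> int_mat U \<and> invertible U \<and> int_mat (matrix_inv U)"

definition pos_def :: "real^'n^'n \<Rightarrow> bool" where
  "pos_def Q \<longleftrightarrow> symmetric_mat Q \<and> (\<forall>x. x \<noteq> 0 \<longrightarrow> qform Q x > 0)"

definition min_class :: "real^'n^'n \<Rightarrow> real" where
  "min_class Q = Inf {qform Q v | v. int_vec v \<and> v \<noteq> 0}"

definition Min_class :: "real^'n^'n \<Rightarrow> (real^'n) set" where
  "Min_class Q = {v. int_vec v \<and> qform Q v = min_class Q}"

definition classically_perfect :: "real^'n^'n \<Rightarrow> bool" where
  "classically_perfect Q \<longleftrightarrow> pos_def Q \<and>
     (\<forall>Q'. symmetric_mat Q' \<and> (\<forall>v\<in>Min_class Q. qform Q' v = min_class Q) \<longrightarrow> Q' = Q)"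

definition copositive :: "real^'n^'n \<Rightarrow> bool" where
  "copositive B \<longleftrightarrow> symmetric_mat B \<and> (\<forall>x. nonneg_vec x \<longrightarrow> qform B x \<ge> 0)"

text \<open>Strictly copositive: interior of COP^n, relative to the space S^n of symmetric matrices.\<close>
definition strictly_copositive :: "real^'n^'n \<Rightarrow> bool" where
  "strictly_copositive B \<longleftrightarrow> copositive B \<and>
     (\<exists>e>0. \<forall>C. symmetric_mat C \<and> norm (C - B) < e \<longrightarrow> copositive C)"

definition min_COP :: "real^'n^'n \<Rightarrow> real" where
  "min_COP B = Inf {qform B v | v. int_vec v \<and> nonneg_vec v \<and> v \<noteq> 0}"

definition Min_COP :: "real^'n^'n \<Rightarrow> (real^'n) set" where
  "Min_COP B = {v. int_vec v \<and> nonneg_vec v \<and> qform B v = min_COP B}"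

definition perfect_copositive :: "real^'n^'n \<Rightarrow> bool" where
  "perfect_copositive P \<longleftrightarrow> strictly_copositive P \<and>
     (\<forall>Q. symmetric_mat Q \<and> (\<forall>v\<in>Min_COP P. qform Q v = min_COP P) \<longrightarrow> Q = P)"

end

theory Submission
  imports Defs
begin

lemma qform_cont: "continuous_on S (\<lambda>x::real^'n. qform A x)"
  unfolding qform_def by (intro continuous_intros linear_continuous_on bounded_linearI' ) (auto simp: matrix_vector_right_distrib)

lemma qform_scale: "qform A (c *\<^sub>R x) = c^2 * qform A x"
  unfolding qform_def by (simp add: matrix_vector_mult_scaleR power2_eq_square)

lemma posdef_bound:
  fixes A :: "real^'n^'n"
  assumes "pos_def A"
  shows "\<exists>c>0. \<forall>x. c * (norm x)^2 \<le> qform A x"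
proof -
  have ne: "sphere (0::real^'n) 1 \<noteq> {}"
    using norm_axis_1 by (metis mem_sphere_0 empty_iff)
  obtain x0 where x0: "x0 \<in> sphere 0 1" "\<And>y. y \<in> sphere 0 1 \<Longrightarrow> qform A x0 \<le> qform A y"
    using continuous_attains_inf[OF compact_sphere ne qform_cont] by blast
  have "x0 \<noteq> 0" using x0(1) by auto
  then have c: "qform A x0 > 0" using assms unfolding pos_def_def by auto
  show ?thesis
  proof (intro exI[of _ "qform A x0"] conjI allI c)
    fix x :: "real^'n"
    show "qform A x0 * (norm x)^2 \<le> qform A x"
    proof (cases "x = 0")
      case True then show ?thesis by (simp add: qform_def)
    next
      case False
      then have n: "norm x > 0" by simp
      have "qform A x0 \<le> qform A ((1/norm x) *\<^sub>R x)" using x0(2) n by simp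
      also have "\<dots> = qform A x / (norm x)^2" by (simp add: qform_scale power_divide)
      finally show ?thesis using n by (simp add: field_simps)
    qed
  qed
qed

lemma qform_abs_bound:
  fixes D :: "real^'n^'n"
  shows "\<bar>qform D x\<bar> \<le> real CARD('n) * norm D * (norm x)^2"
proof -
  have 1: "\<bar>qform D x\<bar> \<le> norm x * norm (D *v x)"
    unfolding qform_def by (rule Cauchy_Schwarz_ineq2)
  have "norm (D *v x) \<le> (\<Sum>i\<in>UNIV. \<bar>(D *v x) $ i\<bar>)" by (rule norm_le_l1_cart)
  also have "\<dots> \<le> (\<Sum>i\<in>(UNIV::'n set). norm D * norm x)"
  proof (rule sum_mono)
    fix i
    have "\<bar>(D *v x) $ i\<bar> \<le> norm (D$i) * norm x"
      unfolding matrix_vector_mul_component by (rule Cauchy_Schwarz_ineq2)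
    also have "\<dots> \<le> norm D * norm x" by (intro mult_right_mono Finite_Cartesian_Product.norm_nth_le) auto
    finally show "\<bar>(D *v x) $ i\<bar> \<le> norm D * norm x" .
  qed
  finally have 2: "norm (D *v x) \<le> real CARD('n) * norm D * norm x" by simp
  have "norm x * norm (D *v x) \<le> norm x * (real CARD('n) * norm D * norm x)"
    using 2 by (intro mult_left_mono) auto
  with 1 show ?thesis by (simp add: power2_eq_square algebra_simps)
qed

definition hsum :: "real \<Rightarrow> (nat \<Rightarrow> real) \<Rightarrow> nat \<Rightarrow> real" where
  "hsum N x k = (\<Sum>t\<le>k. N^(k-t) * x t)"

lemma hsum_0: "hsum N x 0 = x 0" by (simp add: hsum_def)

lemma hsum_Suc: "hsum N x (Suc k) = N * hsum N x k + x (Suc k)"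
proof -
  have "hsum N x (Suc k) = (\<Sum>t\<le>k. N^(Suc k-t) * x t) + x (Suc k)"
    by (simp add: hsum_def)
  also have "(\<Sum>t\<le>k. N^(Suc k-t) * x t) = (\<Sum>t\<le>k. N * (N^(k-t) * x t))"
    by (intro sum.cong refl) (simp add: Suc_diff_le)
  finally show ?thesis by (simp add: hsum_def sum_distrib_left)
qed

lemma hsum_Ints: "N \<in> \<int> \<Longrightarrow> (\<And>t. x t \<in> \<int>) \<Longrightarrow> hsum N x k \<in> \<int>"
  unfolding hsum_def by (intro Ints_sum Ints_mult Ints_power) auto

lemma hsum_sign:
  assumes N: "N \<in> \<int>" and x: "\<And>t. x t \<in> \<int>" and b: "\<And>t. \<bar>x t\<bar> < N"
  shows "(\<forall>t\<le>k. hsum N x t = 0) \<or> (hsum N x k > 0 \<and> (\<forall>t\<le>k. hsum N x t \<ge> 0))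
          \<or> (hsum N x k < 0 \<and> (\<forall>t\<le>k. hsum N x t \<le> 0))"
proof (induction k)
  case 0
  then show ?case by (auto simp: hsum_0)
next
  case (Suc k)
  let ?h = "hsum N x"
  have hs: "?h (Suc k) = N * ?h k + x (Suc k)" by (rule hsum_Suc)
  have Npos: "N > 0" using b[of 0] by linarith
  have hi: "?h k \<in> \<int>" using hsum_Ints[OF N x] .
  have le: "\<And>t. t \<le> Suc k \<longleftrightarrow> t \<le> k \<or> t = Suc k" by auto
  from Suc.IH show ?case
  proof (elim disjE conjE)
    assume "\<forall>t\<le>k. ?h t = 0"
    then show ?thesis unfolding le by auto
  next
    assume p: "?h k > 0" and a: "\<forall>t\<le>k. ?h t \<ge> 0"
    obtain j where j: "?h k = of_int j" using hi by (auto elim: Ints_cases)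
    then have "j > 0" using p by simp
    then have "?h k \<ge> 1" using j by simp
    then have "N * ?h k \<ge> N" using Npos by simp
    then have "?h (Suc k) > 0" using hs b[of "Suc k"] by linarith
    then show ?thesis using a unfolding le by auto
  next
    assume p: "?h k < 0" and a: "\<forall>t\<le>k. ?h t \<le> 0"
    obtain j where j: "?h k = of_int j" using hi by (auto elim: Ints_cases)
    then have "j < 0" using p by simp
    then have "?h k \<le> -1" using j by simp
    then have "N * ?h k \<le> - N" using mult_left_mono[of "?h k" "-1" N] Npos by simp
    then have "?h (Suc k) < 0" using hs b[of "Suc k"] by linarith
    then show ?thesis using a unfolding le by auto
  qed
qed

definition idx :: "(nat \<Rightarrow> 'n::finite) \<Rightarrow> 'n \<Rightarrow> nat" where
  "idx \<sigma> i = inv_into {..<CARD('n)} \<sigma> i"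

definition Vm :: "real \<Rightarrow> (nat \<Rightarrow> 'n::finite) \<Rightarrow> real^'n^'n" where
  "Vm N \<sigma> = (\<chi> i j. if idx \<sigma> j \<le> idx \<sigma> i then N^(idx \<sigma> i - idx \<sigma> j) else 0)"

definition Um :: "real \<Rightarrow> (nat \<Rightarrow> 'n::finite) \<Rightarrow> real^'n^'n" where
  "Um N \<sigma> = (\<chi> i j. (if i = j then 1 else 0) - (if 0 < idx \<sigma> i \<and> j = \<sigma> (idx \<sigma> i - 1) then N else 0))"

lemma idx_props:
  assumes "bij_betw \<sigma> {..<CARD('n)} (UNIV::'n::finite set)"
  shows "idx \<sigma> i < CARD('n)" "\<sigma> (idx \<sigma> i) = i" "t < CARD('n) \<Longrightarrow> idx \<sigma> (\<sigma> t) = t"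
    "idx \<sigma> i = idx \<sigma> j \<longleftrightarrow> i = j"
proof -
  show a: "idx \<sigma> i < CARD('n)" unfolding idx_def
    by (metis assms bij_betw_def inv_into_into iso_tuple_UNIV_I lessThan_iff)
  show b: "\<sigma> (idx \<sigma> i) = i" unfolding idx_def
    by (meson assms bij_betw_inv_into_right iso_tuple_UNIV_I)
  show "t < CARD('n) \<Longrightarrow> idx \<sigma> (\<sigma> t) = t" unfolding idx_def
    by (meson assms bij_betw_inv_into_left lessThan_iff)
  show "idx \<sigma> i = idx \<sigma> j \<longleftrightarrow> i = j" unfolding idx_def
    by (metis assms bij_betw_inv_into_right iso_tuple_UNIV_I)
qed

lemma Vm_apply:
  assumes bij: "bij_betw \<sigma> {..<CARD('n)} (UNIV::'n::finite set)"
  shows "(Vm N \<sigma> *v v) $ i = hsum N (\<lambda>t. v $ \<sigma> t) (idx \<sigma> i)"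
proof -
  let ?k = "idx \<sigma> i"
  have "(Vm N \<sigma> *v v) $ i = (\<Sum>j\<in>UNIV. (if idx \<sigma> j \<le> ?k then N^(?k - idx \<sigma> j) else 0) * v $ j)"
    by (simp add: Vm_def matrix_vector_mult_def)
  also have "\<dots> = (\<Sum>t\<in>{..<CARD('n)}. (if idx \<sigma> (\<sigma> t) \<le> ?k then N^(?k - idx \<sigma> (\<sigma> t)) else 0) * v $ \<sigma> t)"
    by (rule sum.reindex_bij_betw[OF bij, symmetric])
  also have "\<dots> = (\<Sum>t\<in>{..<CARD('n)}. (if t \<le> ?k then N^(?k - t) * v $ \<sigma> t else 0))"
    by (intro sum.cong refl) (auto simp: idx_props[OF bij])
  also have "\<dots> = (\<Sum>t\<in>{..<CARD('n)} \<inter> {..?k}. N^(?k - t) * v $ \<sigma> t)"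
    by (simp add: sum.inter_restrict)
  also have "{..<CARD('n)} \<inter> {..?k} = {..?k}" using idx_props(1)[OF bij, of i] by auto
  finally show ?thesis by (simp add: hsum_def)
qed

lemma UV:
  assumes bij: "bij_betw \<sigma> {..<CARD('n)} (UNIV::'n::finite set)"
  shows "Um N \<sigma> ** Vm N \<sigma> = mat 1"
proof -
  have "(Um N \<sigma> ** Vm N \<sigma>) $ i $ l = mat 1 $ i $ l" for i l :: 'n
  proof -
    let ?k = "idx \<sigma> i" and ?t = "idx \<sigma> l"
    define V where "V = Vm N \<sigma>"
    have "(Um N \<sigma> ** V) $ i $ l = (\<Sum>j\<in>UNIV. ((if i = j then 1 else 0) - (if 0 < ?k \<and> j = \<sigma> (?k - 1) then N else 0)) * V $ j $ l)"
      by (simp add: Um_def matrix_matrix_mult_def)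
    also have "\<dots> = V $ i $ l - (if 0 < ?k then N * V $ \<sigma> (?k - 1) $ l else 0)"
      by (simp add: left_diff_distrib sum_subtractf if_distrib[of "\<lambda>x. x * _"] cong: if_cong)
    also have "\<dots> = (if i = l then 1 else 0)"
    proof (cases "?k = 0")
      case True
      then show ?thesis using idx_props(4)[OF bij, where i=i and j=l] by (auto simp: V_def Vm_def)
    next
      case False
      obtain k' where k': "?k = Suc k'" using False not0_implies_Suc by blast
      have ik: "idx \<sigma> (\<sigma> k') = k'" using idx_props(3)[OF bij, of k'] idx_props(1)[OF bij, of i] k' by simp
      have "V $ i $ l - N * V $ \<sigma> k' $ l = (if ?t = ?k then 1 else 0)"
      proof (cases "?t \<le> k'")
        case True
        then have "N^(Suc k' - ?t) = N * N^(k' - ?t)"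
          by (metis Suc_diff_le power_Suc)
        then show ?thesis using True by (simp add: V_def Vm_def ik k')
      next
        case f2: False
        then show ?thesis by (auto simp: V_def Vm_def ik k')
      qed
      then show ?thesis using k' idx_props(4)[OF bij, where i=l and j=i] by auto
    qed
    finally show ?thesis by (simp add: V_def mat_def)
  qed
  then show ?thesis by (simp add: vec_eq_iff)
qed

lemma qform_transform: "qform (transpose U ** Q ** U) x = qform Q (U *v x)"
  unfolding qform_def
  by (metis dot_lmul_matrix matrix_vector_mul_assoc vector_transpose_matrix)

lemma qform_neg: "qform A (-x) = qform A x"
  using qform_scale[of A "-1" x] by simp

lemma qform_diff: "qform C x = qform B x + qform (C - B) x"
  unfolding qform_def by (simp add: matrix_vector_mult_diff_rdistrib inner_diff_right)

lemma qform_zero[simp]: "qform A 0 = 0" unfolding qform_def by simp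

lemma int_vec_mult: "int_mat U \<Longrightarrow> int_vec v \<Longrightarrow> int_vec (U *v v)"
  unfolding int_mat_def int_vec_def matrix_vector_mult_def
  by (auto intro!: Ints_sum Ints_mult)

lemma int_vec_neg: "int_vec v \<Longrightarrow> int_vec (-v)"
  unfolding int_vec_def by auto

lemma matrix_inv_eq:
  fixes U V :: "'a::field^'n^'n"
  assumes "U ** V = mat 1"
  shows "matrix_inv U = V" "invertible U"
proof -
  have VU: "V ** U = mat 1" using assms matrix_left_right_inverse by blast
  show "invertible U" unfolding invertible_def using assms VU by blast
  have "U ** matrix_inv U = mat 1 \<and> matrix_inv U ** U = mat 1"
    unfolding matrix_inv_def by (rule someI[of _ V]) (use assms VU in blast)
  then have "matrix_inv U ** U = mat 1" by blast
  then have "matrix_inv U ** (U ** V) = V" by (simp add: matrix_mul_assoc)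
  then show "matrix_inv U = V" using assms by simp
qed

lemma posdef_strict_cop:
  fixes P :: "real^'n^'n"
  assumes "pos_def P"
  shows "strictly_copositive P"
proof -
  obtain c where c: "c > 0" "\<And>x. c * (norm x)^2 \<le> qform P x" using posdef_bound[OF assms] by blast
  have sym: "symmetric_mat P" using assms by (simp add: pos_def_def)
  have pos: "\<And>C x. symmetric_mat C \<Longrightarrow> norm (C - P) < c / real CARD('n) \<Longrightarrow> qform C x \<ge> 0"
  proof -
    fix C :: "real^'n^'n" and x :: "real^'n"
    assume "norm (C - P) < c / real CARD('n)"
    then have "real CARD('n) * norm (C - P) \<le> c" by (simp add: field_simps)
    then have "real CARD('n) * norm (C - P) * (norm x)^2 \<le> c * (norm x)^2"
      by (intro mult_right_mono) auto
    moreover have "\<bar>qform (C - P) x\<bar> \<le> real CARD('n) * norm (C - P) * (norm x)^2"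
      by (rule qform_abs_bound)
    moreover note c(2)[of x] qform_diff[of C x P]
    ultimately show "qform C x \<ge> 0" by linarith
  qed
  have cop: "copositive P" unfolding copositive_def
    using sym c by (meson order_trans mult_nonneg_nonneg less_imp_le zero_le_power2)
  have "\<forall>C. symmetric_mat C \<and> norm (C - P) < c / real CARD('n) \<longrightarrow> copositive C"
    unfolding copositive_def using pos by blast
  moreover have "0 < c / real CARD('n)" using c(1) by simp
  ultimately show ?thesis unfolding strictly_copositive_def using cop by blast
qed

theorem theorem6p1:
  fixes Q :: "real^'n^'n"
  assumes "classically_perfect Q"
  shows "\<exists>U. GL_Z U \<and> perfect_copositive (transpose U ** Q ** U)"
proof -
  have pdQ: "pos_def Q" and perf: "\<And>Q'. symmetric_mat Q' \<Longrightarrow> (\<forall>v\<in>Min_class Q. qform Q' v = min_class Q) \<Longrightarrow> Q' = Q"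
    using assms unfolding classically_perfect_def by blast+
  have symQ: "symmetric_mat Q" using pdQ by (simp add: pos_def_def)
  have qpos: "\<And>x. x \<noteq> 0 \<Longrightarrow> qform Q x > 0" using pdQ by (simp add: pos_def_def)
  define m where "m = min_class Q"
  define A where "A = {qform Q v | v. int_vec v \<and> v \<noteq> 0}"
  have mA: "m = Inf A" by (simp add: m_def A_def min_class_def)
  fix i0 :: 'n
  define e1 :: "real^'n" where "e1 = axis i0 1"
  have e1: "int_vec e1" "e1 \<noteq> 0" by (auto simp: e1_def int_vec_def axis_def vec_eq_iff)
  have Ane: "A \<noteq> {}" using e1 by (auto simp: A_def)
  have Apos: "\<And>a. a \<in> A \<Longrightarrow> a > 0" using qpos by (auto simp: A_def)
  have Abdd: "bdd_below A" using Apos by (meson bdd_below.I less_imp_le)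
  have m0: "m \<ge> 0" unfolding mA using Ane Apos by (meson cInf_greatest less_imp_le)
  have Mne: "Min_class Q \<noteq> {} \<and> m \<noteq> 0"
  proof (rule ccontr)
    assume H: "\<not> (Min_class Q \<noteq> {} \<and> m \<noteq> 0)"
    have s2: "symmetric_mat (2 *\<^sub>R Q)" using symQ by (simp add: symmetric_mat_def transpose_scalar)
    have "\<forall>v\<in>Min_class Q. qform (2 *\<^sub>R Q) v = min_class Q"
    proof
      fix v assume v: "v \<in> Min_class Q"
      then have "m = 0" using H by auto
      moreover have "qform Q v = m" using v by (simp add: Min_class_def m_def)
      ultimately show "qform (2 *\<^sub>R Q) v = min_class Q"
        by (simp add: qform_def m_def flip: scaleR_matrix_vector_assoc)
    qed
    then have "2 *\<^sub>R Q = Q" using perf s2 by blast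
    then have "Q = 0" by (simp add: scaleR_2)
    then show False using qpos[OF e1(2)] by (simp add: qform_def)
  qed
  then have mpos: "m > 0" using m0 by simp
  obtain v0 where v0: "v0 \<in> Min_class Q" using Mne by blast
  have v0': "int_vec v0" "qform Q v0 = m" using v0 by (auto simp: Min_class_def m_def)
  have v0nz: "v0 \<noteq> 0" using v0'(2) mpos by auto
  obtain c where c: "c > 0" "\<And>x. c * (norm x)^2 \<le> qform Q x" using posdef_bound[OF pdQ] by blast
  define B where "B = m / c + 1"
  have bnd: "\<bar>v $ j\<bar> \<le> B" if v: "v \<in> Min_class Q" for v j
  proof -
    have "qform Q v = m" using v by (simp add: Min_class_def m_def)
    then have "c * (norm v)^2 \<le> m" using c(2) by metis
    then have nv: "(norm v)^2 \<le> m / c" using c(1) by (simp add: field_simps)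
    have "norm v \<le> B"
    proof (cases "norm v \<le> 1")
      case True
      have "m / c \<ge> 0" using mpos c(1) by simp
      then show ?thesis using True by (simp add: B_def)
    next
      case False
      then have "norm v * 1 \<le> norm v * norm v" by (intro mult_left_mono) auto
      then have "norm v \<le> (norm v)^2" by (simp add: power2_eq_square)
      then show ?thesis using nv by (simp add: B_def)
    qed
    then show ?thesis using component_le_norm_cart[of v j] by linarith
  qed
  define N :: real where "N = of_int (\<lceil>B\<rceil> + 1)"
  have NZ: "N \<in> \<int>" by (simp add: N_def)
  have NB: "B < N" unfolding N_def by linarith
  obtain \<sigma> :: "nat \<Rightarrow> 'n" where bij0: "bij_betw \<sigma> {0..<card (UNIV::'n set)} UNIV"
    using ex_bij_betw_nat_finite[of "UNIV::'n set"] by auto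
  have bij: "bij_betw \<sigma> {..<CARD('n)} (UNIV::'n set)" using bij0 by (simp add: atLeast0LessThan)
  define U where "U = Um N \<sigma>"
  define V where "V = Vm N \<sigma>"
  have UV: "U ** V = mat 1" unfolding U_def V_def by (rule UV[OF bij])
  have VU: "V ** U = mat 1" using UV matrix_left_right_inverse by blast
  have UVv: "\<And>v. U *v (V *v v) = v" by (simp add: matrix_vector_mul_assoc UV)
  have VUv: "\<And>v. V *v (U *v v) = v" by (simp add: matrix_vector_mul_assoc VU)
  have intU: "int_mat U" unfolding int_mat_def U_def Um_def using NZ by auto
  have intV: "int_mat V" unfolding int_mat_def V_def Vm_def using NZ by (auto intro: Ints_power)
  have GL: "GL_Z U" unfolding GL_Z_def using intU intV matrix_inv_eq[OF UV] by simp
  define P where "P = transpose U ** Q ** U"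
  have qP: "\<And>w. qform P w = qform Q (U *v w)" unfolding P_def by (rule qform_transform)
  have Unz: "\<And>w. w \<noteq> 0 \<Longrightarrow> U *v w \<noteq> 0" using VUv by (metis matrix_vector_mult_0_right)
  have symP: "symmetric_mat P" using symQ
    by (simp add: P_def symmetric_mat_def matrix_transpose_mul matrix_mul_assoc)
  have pdP: "pos_def P" unfolding pos_def_def using symP qP Unz qpos by simp
  have sign: "nonneg_vec (V *v v) \<or> nonneg_vec (- (V *v v))" if v: "v \<in> Min_class Q" for v
  proof -
    have vi: "int_vec v" using v by (simp add: Min_class_def)
    define h where "h = hsum N (\<lambda>t. v $ \<sigma> t)"
    have xi: "\<And>t. v $ \<sigma> t \<in> \<int>" using vi by (simp add: int_vec_def)
    have xb: "\<And>t. \<bar>v $ \<sigma> t\<bar> < N" using bnd[OF v] NB by (meson le_less_trans)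
    have D: "(\<forall>t\<le>CARD('n) - 1. h t = 0) \<or> (h (CARD('n) - 1) > 0 \<and> (\<forall>t\<le>CARD('n) - 1. h t \<ge> 0))
      \<or> (h (CARD('n) - 1) < 0 \<and> (\<forall>t\<le>CARD('n) - 1. h t \<le> 0))"
      unfolding h_def by (rule hsum_sign[OF NZ xi xb])
    have ib: "\<And>i. idx \<sigma> i \<le> CARD('n) - 1"
    proof -
      fix i show "idx \<sigma> i \<le> CARD('n) - 1" using idx_props(1)[OF bij, of i] by linarith
    qed
    have Vi: "\<And>i. (V *v v) $ i = h (idx \<sigma> i)" unfolding V_def h_def by (rule Vm_apply[OF bij])
    from D show ?thesis
    proof (elim disjE conjE)
      assume a: "\<forall>t\<le>CARD('n) - 1. h t = 0"
      have "nonneg_vec (V *v v)" unfolding nonneg_vec_def Vi using a ib by simp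
      then show ?thesis ..
    next
      assume a: "\<forall>t\<le>CARD('n) - 1. h t \<ge> 0"
      have "nonneg_vec (V *v v)" unfolding nonneg_vec_def Vi using a ib by simp
      then show ?thesis ..
    next
      assume a: "\<forall>t\<le>CARD('n) - 1. h t \<le> 0"
      have "nonneg_vec (- (V *v v))" unfolding nonneg_vec_def using a ib by (simp add: Vi)
      then show ?thesis ..
    qed
  qed
  have wmin: "qform P (V *v v) = m" "int_vec (V *v v)" if v: "v \<in> Min_class Q" for v
    using v intV by (auto simp: qP UVv Min_class_def m_def intro: int_vec_mult)
  define AP where "AP = {qform P w | w. int_vec w \<and> nonneg_vec w \<and> w \<noteq> 0}"
  have APA: "AP \<subseteq> A" unfolding AP_def A_def using qP Unz int_vec_mult[OF intU] by blast
  have mAP: "m \<in> AP"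
  proof -
    have w0nz: "V *v v0 \<noteq> 0" using UVv v0nz by (metis matrix_vector_mult_0_right)
    from sign[OF v0] show ?thesis
    proof
      assume "nonneg_vec (V *v v0)"
      then show ?thesis unfolding AP_def using wmin[OF v0] w0nz by force
    next
      assume "nonneg_vec (- (V *v v0))"
      then show ?thesis unfolding AP_def using wmin[OF v0] w0nz int_vec_neg qform_neg
        by (metis (mono_tags, lifting) mem_Collect_eq neg_equal_0_iff_equal)
    qed
  qed
  have minP: "min_COP P = m"
  proof -
    have "min_COP P = Inf AP" by (simp add: min_COP_def AP_def)
    moreover have "Inf AP \<le> m" using mAP by (meson Abdd APA bdd_below_mono cInf_lower)
    moreover have "Inf A \<le> Inf AP" proof (rule cInf_superset_mono)
      show "AP \<noteq> {}" using mAP by blast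
    qed (use APA Abdd in auto)
    ultimately show ?thesis using mA by linarith
  qed
  have "perfect_copositive P"
    unfolding perfect_copositive_def
  proof (intro conjI allI impI)
    show "strictly_copositive P" by (rule posdef_strict_cop[OF pdP])
    fix R :: "real^'n^'n"
    assume H: "symmetric_mat R \<and> (\<forall>v\<in>Min_COP P. qform R v = min_COP P)"
    define Q' where "Q' = transpose V ** R ** V"
    have symQ': "symmetric_mat Q'" using H
      by (simp add: Q'_def symmetric_mat_def matrix_transpose_mul matrix_mul_assoc)
    have "\<forall>v\<in>Min_class Q. qform Q' v = min_class Q"
    proof
      fix v assume v: "v \<in> Min_class Q"
      have "qform Q' v = qform R (V *v v)" unfolding Q'_def by (rule qform_transform)
      also have "\<dots> = m"
        using sign[OF v]
      proof
        assume "nonneg_vec (V *v v)"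
        then have "V *v v \<in> Min_COP P" using wmin[OF v] minP by (simp add: Min_COP_def)
        then show "qform R (V *v v) = m" using H minP by simp
      next
        assume "nonneg_vec (- (V *v v))"
        then have "- (V *v v) \<in> Min_COP P" using wmin[OF v] minP by (simp add: Min_COP_def int_vec_neg qform_neg)
        then show "qform R (V *v v) = m" using H minP qform_neg by metis
      qed
      finally show "qform Q' v = min_class Q" by (simp add: m_def)
    qed
    then have QQ: "Q' = Q" using perf symQ' by blast
    have "P = transpose U ** (transpose V ** R ** V) ** U" using QQ by (simp add: P_def Q'_def)
    also have "\<dots> = transpose (V ** U) ** R ** (V ** U)"
      by (simp add: matrix_transpose_mul matrix_mul_assoc)
    also have "\<dots> = R" using VU by simp
    finally show "R = P" by simp
  qed
  then show ?thesis using GL unfolding P_def by blast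
qed
end
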